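(* Let $K$ be an algebraically closed field of characteristic zero, $m,n\ge1$, $\varphi=(\varphi_1,\ldots,\varphi_n)\in K[[t_1,\ldots,t_m]]^n$, and let $E_M=\prod_{1\le i\le n,\ \|J\|_\infty\le r}x_{i,J}^{M_{i,J}}$ be a differential monomial. Then \[\operatorname{trop}(E_M(\varphi))=\operatorname{Vert}\bigl(E_M(\operatorname{Supp}(\varphi))\bigr)=\epsilon_M(\operatorname{Supp}(\varphi)).\]
   Context: Notation: $t^J=t_1^{j_1}\cdots t_m^{j_m}$, $\|J\|_\infty=\max_i j_i$, $\Theta(J)=\partial_{t_1}^{j_1}\cdots\partial_{t_m}^{j_m}$. The differential indeterminates $x_{i,J}$ ($1\le i\le n$, $J\in\mathbb{Z}_{\ge0}^m$) represent derivatives $\Theta(J)x_i$; a differential monomial of order $\le r$ is $E_M=\prod_{i,\|J\|_\infty\le r}x_{i,J}^{M_{i,J}}$ with $M=(M_{i,J})$ nonnegative integers, and $E_M(\varphi)$ is obtained by substituting $\Theta(J)\varphi_i$ for $x_{i,J}$. $\operatorname{Supp}(\sum a_Jt^J)=\{J:a_J\neq0\}$, and $\operatorname{Supp}(\varphi)=(\operatorname{Supp}(\varphi_1),\ldots,\operatorname{Supp}(\varphi_n))$. For $X\subseteq\mathbb{Z}_{\ge0}^m$, $\mathcal{N}(X)$ is the convex hull in $\mathbb{R}^m$ of $X+\mathbb{Z}_{\ge0}^m$, $x\in X$ is a vertex if $x\notin\mathcal{N}(X\setminus\{x\})$, $\operatorname{Vert}(X)$ is the set of vertices, and $\operatorname{trop}(\psi)=\operatorname{Vert}(\operatorname{Supp}(\psi))$.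 For $T\subseteq\mathbb{Z}_{\ge0}^m$, $\Theta_{\operatorname{trop}}(J)T=\{(s_1-j_1,\ldots,s_m-j_m):(s_1,\dots,s_m)\in T,\ s_i\ge j_i\ \forall i\}$. For $S=(S_1,\ldots,S_n)$ of subsets of $\mathbb{Z}_{\ge0}^m$, $E_M(S)=\sum_{i,J}M_{i,J}\Theta_{\operatorname{trop}}(J)S_i$ (Minkowski sums, with $kX$ the $k$-fold Minkowski sum and $0X=\{0\}$). The tropical differential monomial $\epsilon_M$ evaluates as $\epsilon_M(S)=\operatorname{Vert}(E_M(S))$. *)

theory Defs
  imports "HOL-Analysis.Analysis" "HOL-Computational_Algebra.Polynomial"
begin

text \<open>Multi-indices J in Z_{>=0}^m are functions 'm => nat for a finite index type 'm
  (CARD('m) = m). A formal power series in K[[t_1..t_m]] is its coefficient function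
  ('m => nat) => 'a.\<close>

type_synonym ('m, 'a) mps = "('m \<Rightarrow> nat) \<Rightarrow> 'a"

definition idx_le :: "('m \<Rightarrow> nat) \<Rightarrow> ('m \<Rightarrow> nat) \<Rightarrow> bool" where
  "idx_le A B \<longleftrightarrow> (\<forall>k. A k \<le> B k)"

definition mps_mult :: "('m::finite, 'a::comm_ring_1) mps \<Rightarrow> ('m, 'a) mps \<Rightarrow> ('m, 'a) mps" where
  "mps_mult f g = (\<lambda>J. \<Sum>A\<in>{A. idx_le A J}. f A * g (\<lambda>k. J k - A k))"

definition mps_one :: "('m::finite, 'a::comm_ring_1) mps" where
  "mps_one = (\<lambda>J. if (\<forall>k. J k = 0) then 1 else 0)"

fun mps_pow :: "('m::finite, 'a::comm_ring_1) mps \<Rightarrow> nat \<Rightarrow> ('m, 'a) mps" where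
  "mps_pow f 0 = mps_one"
| "mps_pow f (Suc k) = mps_mult f (mps_pow f k)"

definition mps_prod :: "('b \<Rightarrow> ('m::finite, 'a::comm_ring_1) mps) \<Rightarrow> 'b set \<Rightarrow> ('m, 'a) mps" where
  "mps_prod F I = Finite_Set.fold (\<lambda>i acc. mps_mult (F i) acc) mps_one I"

text \<open>Theta(J) = d^{j_1}/dt_1^{j_1} ... d^{j_m}/dt_m^{j_m}, applied coefficientwise:
  the coefficient of t^S in Theta(J) f is prod_k (S_k+J_k)!/S_k! times the coefficient of t^(S+J).\<close>
definition mps_Theta :: "('m::finite \<Rightarrow> nat) \<Rightarrow> ('m, 'a::comm_ring_1) mps \<Rightarrow> ('m, 'a) mps" where
  "mps_Theta J f = (\<lambda>S. of_nat (\<Prod>k\<in>UNIV. fact (S k + J k) div fact (S k)) * f (\<lambda>k. S k + J k))"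

definition idx_box :: "nat \<Rightarrow> ('m::finite \<Rightarrow> nat) set" where
  "idx_box r = {J. \<forall>k. J k \<le> r}"

text \<open>E_M(phi) = prod_{1<=i<=n, ||J||_inf <= r} (Theta(J) phi_i)^{M_{i,J}}; components indexed by i < n.\<close>
definition diff_mono_eval ::
  "nat \<Rightarrow> nat \<Rightarrow> (nat \<Rightarrow> ('m::finite \<Rightarrow> nat) \<Rightarrow> nat) \<Rightarrow> (nat \<Rightarrow> ('m, 'a::comm_ring_1) mps) \<Rightarrow> ('m, 'a) mps" where
  "diff_mono_eval n r M \<phi> =
     mps_prod (\<lambda>(i, J). mps_pow (mps_Theta J (\<phi> i)) (M i J)) ({..<n} \<times> idx_box r)"

definition Supp :: "('m, 'a::zero) mps \<Rightarrow> ('m \<Rightarrow> nat) set" where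
  "Supp f = {J. f J \<noteq> 0}"

definition idx_vec :: "('m::finite \<Rightarrow> nat) \<Rightarrow> real ^ 'm" where
  "idx_vec J = (\<chi> k. real (J k))"

definition newton :: "('m::finite \<Rightarrow> nat) set \<Rightarrow> (real ^ 'm) set" where
  "newton X = convex hull {idx_vec (\<lambda>k. x k + y k) | x y. x \<in> X}"

definition Vert :: "('m::finite \<Rightarrow> nat) set \<Rightarrow> ('m \<Rightarrow> nat) set" where
  "Vert X = {x \<in> X. idx_vec x \<notin> newton (X - {x})}"

definition trop :: "('m::finite, 'a::zero) mps \<Rightarrow> ('m \<Rightarrow> nat) set" where
  "trop \<psi> = Vert (Supp \<psi>)"

definition Theta_trop :: "('m \<Rightarrow> nat) \<Rightarrow> ('m \<Rightarrow> nat) set \<Rightarrow> ('m \<Rightarrow> nat) set" where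
  "Theta_trop J T = {(\<lambda>k. s k - J k) | s. s \<in> T \<and> (\<forall>k. J k \<le> s k)}"

definition mink_sum_family :: "('b \<Rightarrow> ('m \<Rightarrow> nat) set) \<Rightarrow> 'b set \<Rightarrow> ('m \<Rightarrow> nat) set" where
  "mink_sum_family A I = {(\<lambda>k. \<Sum>p\<in>I. f p k) | f. \<forall>p\<in>I. f p \<in> A p}"

fun mink_pow :: "('m \<Rightarrow> nat) set \<Rightarrow> nat \<Rightarrow> ('m \<Rightarrow> nat) set" where
  "mink_pow X 0 = {(\<lambda>k. 0)}"
| "mink_pow X (Suc j) = {(\<lambda>k. a k + b k) | a b. a \<in> X \<and> b \<in> mink_pow X j}"

definition diff_mono_trop_sets ::
  "nat \<Rightarrow> nat \<Rightarrow> (nat \<Rightarrow> ('m::finite \<Rightarrow> nat) \<Rightarrow> nat) \<Rightarrow> (nat \<Rightarrow> ('m \<Rightarrow> nat) set) \<Rightarrow> ('m \<Rightarrow> nat) set" where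
  "diff_mono_trop_sets n r M S =
     mink_sum_family (\<lambda>(i, J). mink_pow (Theta_trop J (S i)) (M i J)) ({..<n} \<times> idx_box r)"

definition eps_M ::
  "nat \<Rightarrow> nat \<Rightarrow> (nat \<Rightarrow> ('m::finite \<Rightarrow> nat) \<Rightarrow> nat) \<Rightarrow> (nat \<Rightarrow> ('m \<Rightarrow> nat) set) \<Rightarrow> ('m \<Rightarrow> nat) set" where
  "eps_M n r M S = Vert (diff_mono_trop_sets n r M S)"

end

theory Submission
  imports Defs
begin


definition gen :: "('m::finite \<Rightarrow> nat) set \<Rightarrow> (real ^ 'm) set" where
  "gen X = {idx_vec (\<lambda>k. x k + y k) | x y. x \<in> X}"

lemma idx_vec_add: "idx_vec (\<lambda>k. a k + b k) = idx_vec a + idx_vec b"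
  by (simp add: idx_vec_def vec_eq_iff)

lemma idx_vec_nth[simp]: "idx_vec a $ k = real (a k)"
  by (simp add: idx_vec_def)

lemma idx_vec_inj: "idx_vec a = idx_vec b \<longleftrightarrow> a = b"
  by (auto simp: vec_eq_iff fun_eq_iff)

lemma newton_gen: "newton X = convex hull gen X"
  by (simp add: newton_def gen_def)

lemma convex_newton: "convex (newton X)"
  by (simp add: newton_gen)

lemma gen_mono: "X \<subseteq> Y \<Longrightarrow> gen X \<subseteq> gen Y"
  unfolding gen_def by blast

lemma newton_mono: "X \<subseteq> Y \<Longrightarrow> newton X \<subseteq> newton Y"
  unfolding newton_gen by (intro hull_mono gen_mono)

lemma gen_newton: "gen X \<subseteq> newton X"
  unfolding newton_gen by (rule hull_subset)

lemma idx_in_gen: "x \<in> X \<Longrightarrow> idx_vec x \<in> gen X"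
  unfolding gen_def by (rule CollectI, rule exI[of _ x], rule exI[of _ "\<lambda>k. 0"]) simp

lemma idx_in_newton: "x \<in> X \<Longrightarrow> idx_vec x \<in> newton X"
  using idx_in_gen gen_newton by blast

lemma newton_add_int:
  assumes "v \<in> newton X" shows "v + idx_vec n \<in> newton X"
proof -
  have "(\<lambda>z. idx_vec n + z) ` gen X \<subseteq> gen X"
  proof
    fix z assume "z \<in> (\<lambda>z. idx_vec n + z) ` gen X"
    then obtain x y where "x \<in> X" "z = idx_vec n + idx_vec (\<lambda>k. x k + y k)"
      unfolding gen_def by blast
    moreover have "idx_vec n + idx_vec (\<lambda>k. x k + y k) = idx_vec (\<lambda>k. x k + (y k + n k))"
      by (simp add: vec_eq_iff)
    ultimately show "z \<in> gen X" unfolding gen_def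
      by (intro CollectI exI[of _ x] exI[of _ "\<lambda>k. y k + n k"]) simp
  qed
  then have "convex hull ((\<lambda>z. idx_vec n + z) ` gen X) \<subseteq> convex hull gen X" by (rule hull_mono)
  then have "(\<lambda>z. idx_vec n + z) ` newton X \<subseteq> newton X"
    by (simp add: convex_hull_translation newton_gen)
  then show ?thesis using assms by (auto simp: add.commute)
qed

lemma newton_add_axis:
  assumes v: "v \<in> newton X" and t: "0 \<le> t"
  shows "v + t *\<^sub>R axis k 1 \<in> newton X"
proof (cases "t = 0")
  case True then show ?thesis using v by simp
next
  case False
  then have tp: "t > 0" using t by simp
  define N where "N = nat \<lceil>t\<rceil>"
  have NT: "real N \<ge> t" unfolding N_def by linarith
  then have Np: "real N > 0" using tp by linarith
  have w: "v + idx_vec (\<lambda>j. if j = k then N else 0) \<in> newton X"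
    by (rule newton_add_int[OF v])
  have e: "idx_vec (\<lambda>j. if j = k then N else 0) = real N *\<^sub>R axis k 1"
    by (simp add: vec_eq_iff axis_def)
  have eq: "v + t *\<^sub>R axis k 1 = (1 - t / real N) *\<^sub>R v + (t / real N) *\<^sub>R (v + real N *\<^sub>R axis k 1)"
    using Np by (simp add: vec_eq_iff field_simps)
  show ?thesis unfolding eq
    by (rule convexD[OF convex_newton v w[unfolded e]]) (use t NT Np in \<open>auto simp: field_simps\<close>)
qed

lemma newton_add_pos:
  assumes v: "v \<in> newton X" and p: "\<And>k. 0 \<le> p $ k"
  shows "v + p \<in> newton X"
proof -
  have "finite K \<Longrightarrow> v + (\<Sum>k\<in>K. p $ k *\<^sub>R axis k 1) \<in> newton X" for K
  proof (induction K rule: finite_induct)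
    case empty then show ?case using v by simp
  next
    case (insert x F)
    have "v + (\<Sum>k\<in>insert x F. p $ k *\<^sub>R axis k 1) = (v + (\<Sum>k\<in>F. p $ k *\<^sub>R axis k 1)) + p $ x *\<^sub>R axis x 1"
      using insert by (simp add: algebra_simps)
    then show ?case using newton_add_axis[OF insert(3), of "p $ x" x] p by (simp add: add.assoc)
  qed
  from this[of UNIV] show ?thesis
    using basis_expansion[of p] by (simp add: scalar_mult_eq_scaleR)
qed

definition upc :: "('m::finite \<Rightarrow> nat) \<Rightarrow> (real ^ 'm) set" where
  "upc x = {z. \<forall>k. real (x k) \<le> z $ k}"

lemma convex_upc: fixes x :: "'m::finite \<Rightarrow> nat" shows "convex (upc x)"
proof (rule convexI)
  fix a b :: "real ^ 'm" and u v :: real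
  assume a': "a \<in> upc x" and b': "b \<in> upc x"
    and u: "0 \<le> u" and v: "0 \<le> v" and uv: "u + v = 1"
  have a: "\<forall>k. real (x k) \<le> a $ k" and b: "\<forall>k. real (x k) \<le> b $ k" using a' b' by (auto simp: upc_def)
  show "u *\<^sub>R a + v *\<^sub>R b \<in> upc x" unfolding upc_def
  proof (clarsimp)
  fix k
  have "u * real (x k) \<le> u * a $ k" using a u by (simp add: mult_left_mono)
  moreover have "v * real (x k) \<le> v * b $ k" using b v by (simp add: mult_left_mono)
  ultimately have "(u + v) * real (x k) \<le> u * a $ k + v * b $ k" by (simp add: algebra_simps)
  then show "real (x k) \<le> u * a $ k + v * b $ k" using uv by simp
qed
qed

lemma newton_single_upc: "newton {x} \<subseteq> upc x"
  unfolding newton_gen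
  using convex_upc[of x] by (intro hull_minimal) (auto simp: gen_def upc_def)

lemma upc_seg:
  assumes "a \<in> upc x" "b \<in> upc x" "idx_vec x \<in> open_segment a b"
  shows False
proof -
  from assms(3) obtain u where ab: "a \<noteq> b" and u: "0 < u" "u < 1"
    and eq: "idx_vec x = (1 - u) *\<^sub>R a + u *\<^sub>R b"
    by (auto simp: in_segment)
  have "a $ k = b $ k" for k
  proof -
    have e: "real (x k) = (1 - u) * a $ k + u * b $ k" using eq by (simp add: vec_eq_iff)
    have "real (x k) \<le> a $ k" "real (x k) \<le> b $ k" using assms(1,2) by (auto simp: upc_def)
    have 1: "(1 - u) * (a $ k - real (x k)) \<ge> 0" using \<open>real (x k) \<le> a $ k\<close> u by simp
    have 2: "u * (b $ k - real (x k)) \<ge> 0" using \<open>real (x k) \<le> b $ k\<close> u by simp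
    have "(1 - u) * (a $ k - real (x k)) + u * (b $ k - real (x k)) = 0"
      using e by (simp add: algebra_simps)
    then have "(1 - u) * (a $ k - real (x k)) = 0" "u * (b $ k - real (x k)) = 0"
      using 1 2 by linarith+
    then show ?thesis using u by simp
  qed
  then show False using ab by (simp add: vec_eq_iff)
qed


lemma aux: fixes c w v1 v2 u1 u2 X s1 s2 t1 t2 :: real
  assumes "c \<noteq> 0" "c = (1-w)* v1 + w* v2" "u1 + v1 = 1" "u2+v2=1" "X = (1-w)*(u1* s1 + v1* t1) + w*(u2* s2+v2* t2)"
  shows "X = ((1-w)* v1/c* t1 + w* v2/c* t2) + 1/c*((1-w)* u1*(s1-X) + w* u2*(s2-X))"
proof -
  have u1: "u1 = 1 - v1" "u2 = 1 - v2" using assms by auto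
  define Q where "Q = (1-w)* v1* t1 + w* v2* t2 + ((1-w)* u1*(s1-X) + w* u2*(s2-X))"
  have "c * X = Q"
    using assms(5) unfolding u1 assms(2) Q_def by (simp add: algebra_simps)
  then have 1: "X = Q / c" using assms(1) by (simp add: field_simps)
  have 2: "((1-w)* v1/c* t1 + w* v2/c* t2) + 1/c*((1-w)* u1*(s1-X) + w* u2*(s2-X)) = Q / c"
    unfolding Q_def using assms(1) by (simp add: field_simps)
  show ?thesis using 1 2 by simp
qed

lemma E_fwd:
  assumes x: "x \<in> X" and nv: "idx_vec x \<notin> newton (X - {x})"
  shows "idx_vec x extreme_point_of newton X"
proof -
  define S where "S = X - {x}"
  define X0 where "X0 = idx_vec x"
  have X0u: "X0 \<in> upc x" by (simp add: X0_def upc_def)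
  have gX: "gen X \<subseteq> upc x \<union> newton S"
  proof
    fix z assume "z \<in> gen X"
    then obtain y n where y: "y \<in> X" and z: "z = idx_vec (\<lambda>k. y k + n k)" unfolding gen_def by blast
    show "z \<in> upc x \<union> newton S"
    proof (cases "y = x")
      case True then show ?thesis using z by (simp add: upc_def)
    next
      case False then have "z \<in> gen S" using y z unfolding gen_def S_def by blast
      then show ?thesis using gen_newton by blast
    qed
  qed
  have NX: "newton X \<subseteq> convex hull (upc x \<union> newton S)"
    unfolding newton_gen[of X] by (rule hull_mono[OF gX])
  have main: False if a: "a \<in> newton X" and b: "b \<in> newton X" and seg: "X0 \<in> open_segment a b" for a b
  proof (cases "S = {}")
    case True
    then have "newton S = {}" by (simp add: newton_gen gen_def)
    then have "newton X \<subseteq> upc x" using NX hull_same[of convex "upc x", OF convex_upc] by simp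
    then show False using upc_seg a b seg X0_def by blast
  next
    case False
    then obtain s where "s \<in> S" by blast
    then have ne: "newton S \<noteq> {}" using idx_in_newton by blast
    have CH: "convex hull (upc x \<union> newton S) =
      {u *\<^sub>R s + v *\<^sub>R t | u v s t. u \<ge> 0 \<and> v \<ge> 0 \<and> u + v = 1 \<and> s \<in> upc x \<and> t \<in> newton S}"
      by (rule convex_hull_union_two[OF convex_upc _ convex_newton ne]) (use X0u in auto)
    obtain u1 v1 s1 t1 where A: "a = u1 *\<^sub>R s1 + v1 *\<^sub>R t1" "u1 \<ge> 0" "v1 \<ge> 0" "u1 + v1 = 1"
      "s1 \<in> upc x" "t1 \<in> newton S" using a NX CH by blast
    obtain u2 v2 s2 t2 where B: "b = u2 *\<^sub>R s2 + v2 *\<^sub>R t2" "u2 \<ge> 0" "v2 \<ge> 0" "u2 + v2 = 1"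
      "s2 \<in> upc x" "t2 \<in> newton S" using b NX CH by blast
    obtain w where ab: "a \<noteq> b" and w: "0 < w" "w < 1" and eq: "X0 = (1 - w) *\<^sub>R a + w *\<^sub>R b"
      using seg by (auto simp: in_segment)
    define c where "c = (1-w)* v1 + w* v2"
    have c1: "(1-w)* v1 \<ge> 0" "w* v2 \<ge> 0" using w A B by simp_all
    show False
    proof (cases "c = 0")
      case True
      then have "(1-w)* v1 = 0" "w* v2 = 0" using c1 unfolding c_def by linarith+
      then have "v1 = 0" "v2 = 0" using w by simp_all
      then have "a = s1" "b = s2" using A B by simp_all
      then show False using upc_seg A B seg X0_def by blast
    next
      case False
      then have cp: "c > 0" using c1 unfolding c_def by linarith
      define t where "t = ((1-w)* v1/c) *\<^sub>R t1 + (w* v2/c) *\<^sub>R t2"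
      have sum1: "(1-w) * v1/c + w * v2/c = 1"
      proof -
        have "(1-w) * v1/c + w * v2/c = ((1-w) * v1 + w * v2)/c" by (rule add_divide_distrib[symmetric])
        also have "\<dots> = c / c" by (simp only: c_def)
        also have "\<dots> = 1" using cp by simp
        finally show ?thesis .
      qed
      have q1: "0 \<le> (1-w) * v1/c" using c1 cp by simp
      have q2: "0 \<le> w * v2/c" using c1 cp by simp
      have tS: "t \<in> newton S" unfolding t_def
        by (rule convexD[OF convex_newton A(6) B(6) q1 q2 sum1])
      define p where "p = (1/c) *\<^sub>R (((1-w)* u1) *\<^sub>R (s1 - X0) + (w* u2) *\<^sub>R (s2 - X0))"
      have p0: "0 \<le> p $ k" for k
      proof -
        have "X0 $ k \<le> s1 $ k" "X0 $ k \<le> s2 $ k" using A(5) B(5) by (auto simp: upc_def X0_def)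
        then have n1: "0 \<le> (1-w) * u1 * (s1$k - X0$k)" "0 \<le> w * u2 * (s2$k - X0$k)"
          using w A(2) B(2) by (simp_all add: mult_nonneg_nonneg)
        have "p $ k = (1/c) * ((1-w) * u1 * (s1$k - X0$k) + w * u2 * (s2$k - X0$k))"
          unfolding p_def by simp
        then show ?thesis using n1 cp by simp
      qed
      have "X0 = t + p"
      proof (subst vec_eq_iff, intro allI)
        fix k
        have e: "X0 $ k = (1-w)*(u1* s1$k + v1* t1$k) + w*(u2* s2$k+v2* t2$k)"
          using eq A(1) B(1) by simp
        have tp: "(t + p) $ k = ((1-w) * v1/c * t1$k + w * v2/c * t2$k) + 1/c*((1-w) * u1 * (s1$k - X0$k) + w * u2 * (s2$k - X0$k))"
          unfolding t_def p_def by simp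
        show "X0 $ k = (t + p) $ k"
          unfolding tp by (rule aux[OF False c_def A(4) B(4) e])
      qed
      then have "X0 \<in> newton S" using newton_add_pos[OF tS p0] by simp
      then show False using nv X0_def S_def by simp
    qed
  qed
  show ?thesis unfolding extreme_point_of_def using main idx_in_newton[OF x] X0_def by blast
qed

lemma E_bwd:
  assumes x: "x \<in> X" and ex: "idx_vec x extreme_point_of newton X"
  shows "idx_vec x \<notin> newton (X - {x})"
proof -
  define X0 where "X0 = idx_vec x"
  have cv: "convex (newton X - {X0})" using ex extreme_point_of_stillconvex[OF convex_newton] X0_def by blast
  have "gen (X - {x}) \<subseteq> newton X - {X0}"
  proof
    fix z assume "z \<in> gen (X - {x})"
    then obtain y n where y: "y \<in> X" "y \<noteq> x" and z: "z = idx_vec (\<lambda>k. y k + n k)"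
      unfolding gen_def by blast
    have "z \<in> gen X" unfolding z gen_def by (intro CollectI exI[of _ y] exI[of _ n]) (simp add: y(1))
    then have zN: "z \<in> newton X" using gen_newton by auto
    have "z \<noteq> X0"
    proof
      assume "z = X0"
      then have "idx_vec (\<lambda>k. y k + n k) = idx_vec x" using z X0_def by simp
      then have xyn: "(\<lambda>k. y k + n k) = x" by (simp only: idx_vec_inj)
      have "n \<noteq> (\<lambda>k. 0)" using xyn y(2) by auto
      then obtain k where "n k \<noteq> 0" by auto
      then have k: "n k \<ge> 1" by simp
      define e :: "real ^ 'a" where "e = axis k 1"
      have m: "idx_vec (\<lambda>j. y j + (n j - (if j = k then 1 else 0))) = X0 - e"
        using k unfolding X0_def e_def xyn[symmetric] by (auto simp: vec_eq_iff axis_def of_nat_diff)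
      have p: "idx_vec (\<lambda>j. x j + (if j = k then 1 else 0)) = X0 + e"
        unfolding X0_def e_def by (auto simp: vec_eq_iff axis_def)
      have "idx_vec (\<lambda>j. y j + (n j - (if j = k then 1 else 0))) \<in> gen X"
        unfolding gen_def by (intro CollectI exI[of _ y] exI[of _ "\<lambda>j. n j - (if j = k then 1 else 0)"]) (simp add: y(1))
      then have m': "X0 - e \<in> newton X" using m gen_newton by auto
      have "idx_vec (\<lambda>j. x j + (if j = k then 1 else 0)) \<in> gen X"
        unfolding gen_def by (intro CollectI exI[of _ x] exI[of _ "\<lambda>j. (if j = k then 1 else 0)"]) (simp add: x)
      then have p': "X0 + e \<in> newton X" using p gen_newton by auto
      have e0: "e \<noteq> 0" by (simp add: e_def axis_eq_0_iff)
      have ne: "X0 - e \<noteq> X0 + e"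
      proof
        assume "X0 - e = X0 + e"
        then have "(X0 + e) - (X0 - e) = 0" by simp
        then have "2 *\<^sub>R e = 0" by (simp add: scaleR_2)
        then show False using e0 by simp
      qed
      have "X0 = (1 - 1/2) *\<^sub>R (X0 - e) + (1/2) *\<^sub>R (X0 + e)"
        by (simp add: vec_eq_iff algebra_simps)
      then have "X0 \<in> open_segment (X0 - e) (X0 + e)"
        unfolding in_segment using ne by (intro conjI exI[of _ "1/2"]) auto
      then show False using ex m' p' X0_def unfolding extreme_point_of_def by blast
    qed
    then show "z \<in> newton X - {X0}" using zN by blast
  qed
  then have "newton (X - {x}) \<subseteq> newton X - {X0}"
    unfolding newton_gen[of "X - {x}"] by (rule hull_minimal) (rule cv)
  then show ?thesis using X0_def by blast
qed

lemma vert_iff: "x \<in> X \<Longrightarrow> x \<in> Vert X \<longleftrightarrow> idx_vec x extreme_point_of newton X"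
  unfolding Vert_def using E_fwd E_bwd by blast

lemma Vert_sub: "Vert X \<subseteq> X" unfolding Vert_def by blast

lemma vert_transfer:
  assumes "newton Z = newton Y" "y \<in> Y" "y \<in> Vert Z" shows "y \<in> Vert Y"
proof -
  have yZ: "y \<in> Z" using assms(3) Vert_sub by blast
  have e1: "y \<in> Vert Z \<longleftrightarrow> idx_vec y extreme_point_of newton Z" by (rule vert_iff[OF yZ])
  have e2: "y \<in> Vert Y \<longleftrightarrow> idx_vec y extreme_point_of newton Y" by (rule vert_iff[OF assms(2)])
  show ?thesis using e1 e2 assms(1,3) by simp
qed




lemma newton_absorb:
  assumes "idx_vec y \<in> newton S" shows "newton (insert y S) = newton S"
proof
  show "newton S \<subseteq> newton (insert y S)" by (rule newton_mono) blast
  have "gen (insert y S) \<subseteq> newton S"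
  proof
    fix z assume "z \<in> gen (insert y S)"
    then obtain x n where x: "x \<in> insert y S" and z: "z = idx_vec (\<lambda>k. x k + n k)" unfolding gen_def by blast
    show "z \<in> newton S"
    proof (cases "x = y")
      case True then show ?thesis using newton_add_int[OF assms, of n] z by (simp add: idx_vec_add)
    next
      case False then have "x \<in> S" using x by simp
      then have "z \<in> gen S" unfolding z gen_def by (intro CollectI exI[of _ x] exI[of _ n]) simp
      then show ?thesis using gen_newton by auto
    qed
  qed
  then show "newton (insert y S) \<subseteq> newton S" unfolding newton_gen[of "insert y S"]
    by (rule hull_minimal) (rule convex_newton)
qed

lemma finite_gen: "finite F \<Longrightarrow> newton F \<subseteq> newton (Vert F)"
proof (induction F rule: finite_psubset_induct)
  case (psubset F)
  show ?case
  proof (cases "F \<subseteq> Vert F")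
    case True then have "Vert F = F" using Vert_sub by blast
    then show ?thesis by simp
  next
    case False
    then obtain x where x: "x \<in> F" "x \<notin> Vert F" by blast
    then have xn: "idx_vec x \<in> newton (F - {x})" unfolding Vert_def by blast
    have eq: "newton F = newton (F - {x})" using newton_absorb[OF xn] x(1) by (simp add: insert_absorb)
    have IH: "newton (F - {x}) \<subseteq> newton (Vert (F - {x}))" using psubset.IH x(1) by blast
    have "Vert (F - {x}) \<subseteq> Vert F"
    proof
      fix y assume y: "y \<in> Vert (F - {x})"
      then have "y \<in> F" using Vert_sub by blast
      then show "y \<in> Vert F" using vert_transfer[OF eq[symmetric] _ y] by blast
    qed
    then have "newton (Vert (F - {x})) \<subseteq> newton (Vert F)" by (rule newton_mono)
    then show ?thesis using eq IH by blast
  qed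
qed

lemma dickson_aux:
  fixes X :: "('m \<Rightarrow> nat) set"
  shows "finite K \<Longrightarrow> \<exists>F. finite F \<and> F \<subseteq> X \<and> (\<forall>y\<in>X. \<exists>f\<in>F. \<forall>k\<in>K. f k \<le> y k)"
proof (induction K arbitrary: X rule: finite_induct)
  case empty
  show ?case
  proof (cases "X = {}")
    case True then show ?thesis by (intro exI[of _ "{}"]) simp
  next
    case False then obtain x where "x \<in> X" by blast
    then show ?thesis by (intro exI[of _ "{x}"]) auto
  qed
next
  case (insert j K)
  obtain F0 where F0: "finite F0" "F0 \<subseteq> X" "\<forall>y\<in>X. \<exists>f\<in>F0. \<forall>k\<in>K. f k \<le> y k"
    using insert.IH[of X] by (elim exE conjE) blast
  define B where "B = Max (insert 0 ((\<lambda>f. f j) ` F0))"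
  have B: "f j \<le> B" if "f \<in> F0" for f
  proof -
    have "finite (insert 0 ((\<lambda>f. f j) ` F0))" using F0(1) by simp
    moreover have "f j \<in> insert 0 ((\<lambda>f. f j) ` F0)" using that by simp
    ultimately show ?thesis unfolding B_def by (rule Max_ge)
  qed
  have "\<forall>c. \<exists>Fc. finite Fc \<and> Fc \<subseteq> {y\<in>X. y j = c} \<and> (\<forall>y\<in>{y\<in>X. y j = c}. \<exists>f\<in>Fc. \<forall>k\<in>K. f k \<le> y k)"
    by (intro allI insert.IH)
  from choice[OF this] obtain G where G: "\<forall>c. finite (G c) \<and> G c \<subseteq> {y\<in>X. y j = c} \<and> (\<forall>y\<in>{y\<in>X. y j = c}. \<exists>f\<in>G c. \<forall>k\<in>K. f k \<le> y k)"
    by (rule exE)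
  have Gfin: "finite (G c)" for c using G by simp
  have Gsub: "G c \<subseteq> {y\<in>X. y j = c}" for c using G by simp
  have Gcov: "\<exists>f\<in>G c. \<forall>k\<in>K. f k \<le> y k" if "y \<in> X" "y j = c" for c y
  proof -
    have "\<forall>y\<in>{y\<in>X. y j = c}. \<exists>f\<in>G c. \<forall>k\<in>K. f k \<le> y k" using G by simp
    moreover have "y \<in> {y\<in>X. y j = c}" using that by simp
    ultimately show ?thesis by (rule bspec)
  qed
  define F where "F = F0 \<union> (\<Union>c\<in>{..<B}. G c)"
  show ?case
  proof (intro exI[of _ F] conjI ballI)
    show "finite F" unfolding F_def using F0(1) Gfin by simp
    show "F \<subseteq> X" unfolding F_def using F0(2) Gsub by fast
    fix y assume y: "y \<in> X"
    show "\<exists>f\<in>F. \<forall>k\<in>insert j K. f k \<le> y k"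
    proof (cases "y j < B")
      case True
      obtain f where f: "f \<in> G (y j)" "\<forall>k\<in>K. f k \<le> y k" using Gcov[OF y refl] by (elim bexE)
      have "f j = y j" using f(1) Gsub[of "y j"] by fast
      moreover have "f \<in> F" unfolding F_def using f(1) True by fast
      ultimately show ?thesis using f(2) by (intro bexI[of _ f]) auto
    next
      case False
      obtain f where f: "f \<in> F0" "\<forall>k\<in>K. f k \<le> y k" using F0(3) y by fast
      have "f j \<le> y j" using B[OF f(1)] False by simp
      moreover have "f \<in> F" unfolding F_def using f(1) by fast
      ultimately show ?thesis using f(2) by (intro bexI[of _ f]) auto
    qed
  qed
qed

lemma newton_finite_rep: "\<exists>F. finite F \<and> F \<subseteq> X \<and> newton F = newton X"
proof -
  obtain F where F: "finite F" "F \<subseteq> X" "\<forall>y\<in>X. \<exists>f\<in>F. \<forall>k\<in>UNIV. f k \<le> y k"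
    using dickson_aux[of UNIV X] by auto
  have "gen X \<subseteq> gen F"
  proof
    fix z assume "z \<in> gen X"
    then obtain y n where y: "y \<in> X" and z: "z = idx_vec (\<lambda>k. y k + n k)" unfolding gen_def by blast
    obtain f where f: "f \<in> F" "\<forall>k. f k \<le> y k" using F(3) y by blast
    have e: "(\<lambda>k. f k + ((y k - f k) + n k)) = (\<lambda>k. y k + n k)"
    proof (rule ext)
      fix k show "f k + ((y k - f k) + n k) = y k + n k" using f(2)[rule_format, of k] by arith
    qed
    have "z = idx_vec (\<lambda>k. f k + ((y k - f k) + n k))" by (simp only: e z)
    then show "z \<in> gen F" unfolding gen_def
      by (intro CollectI exI[of _ f] exI[of _ "\<lambda>k. (y k - f k) + n k"]) (simp add: f(1))
  qed
  then have "newton X \<subseteq> newton F" unfolding newton_gen by (rule hull_mono)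
  moreover have "newton F \<subseteq> newton X" using F(2) by (rule newton_mono)
  ultimately show ?thesis using F(1,2) by blast
qed

lemma generation: "newton X \<subseteq> newton (Vert X)"
proof -
  obtain F where F: "finite F" "F \<subseteq> X" "newton F = newton X" using newton_finite_rep by blast
  have "Vert F \<subseteq> Vert X"
  proof
    fix y assume y: "y \<in> Vert F"
    then have "y \<in> X" using Vert_sub F(2) by blast
    then show "y \<in> Vert X" using vert_transfer[OF F(3) _ y] by blast
  qed
  then have "newton (Vert F) \<subseteq> newton (Vert X)" by (rule newton_mono)
  then show ?thesis using finite_gen[OF F(1)] F(3) by blast
qed

lemma K2:
  assumes CD: "C \<subseteq> D" and VD: "Vert D \<subseteq> C" shows "Vert C = Vert D"
proof
  show "Vert D \<subseteq> Vert C"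
  proof
    fix x assume x: "x \<in> Vert D"
    have "newton (C - {x}) \<subseteq> newton (D - {x})" using CD by (intro newton_mono) blast
    then show "x \<in> Vert C" using x VD unfolding Vert_def by blast
  qed
  show "Vert C \<subseteq> Vert D"
  proof
    fix x assume x: "x \<in> Vert C"
    then have xC: "x \<in> C" and nx: "idx_vec x \<notin> newton (C - {x})" unfolding Vert_def by auto
    show "x \<in> Vert D"
    proof (rule ccontr)
      assume "x \<notin> Vert D"
      then have "Vert D \<subseteq> C - {x}" using VD by blast
      then have "newton (Vert D) \<subseteq> newton (C - {x})" by (rule newton_mono)
      moreover have "idx_vec x \<in> newton D" using xC CD idx_in_newton by blast
      ultimately show False using generation[of D] nx by blast
    qed
  qed
qed

definition psum :: "('m \<Rightarrow> nat) set \<Rightarrow> ('m \<Rightarrow> nat) set \<Rightarrow> ('m \<Rightarrow> nat) set" where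
  "psum A B = {(\<lambda>k. a k + b k) | a b. a \<in> A \<and> b \<in> B}"

lemma psum_comm: "psum A B = psum B A"
proof -
  have "psum A B \<subseteq> psum B A" for A B :: "('m \<Rightarrow> nat) set"
  proof
    fix z assume "z \<in> psum A B"
    then obtain a b where "a \<in> A" "b \<in> B" "z = (\<lambda>k. a k + b k)" unfolding psum_def by blast
    then show "z \<in> psum B A" unfolding psum_def
      by (intro CollectI exI[of _ b] exI[of _ a]) (simp add: add.commute)
  qed
  then show ?thesis by blast
qed

lemma newton_translate:
  assumes "v \<in> newton X" shows "v + idx_vec b \<in> newton (psum X {b})"
proof -
  have "(\<lambda>z. idx_vec b + z) ` gen X \<subseteq> gen (psum X {b})"
  proof
    fix z assume "z \<in> (\<lambda>z. idx_vec b + z) ` gen X"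
    then obtain x y where x: "x \<in> X" and z: "z = idx_vec b + idx_vec (\<lambda>k. x k + y k)"
      unfolding gen_def by blast
    have xb: "(\<lambda>k. x k + b k) \<in> psum X {b}" unfolding psum_def using x by blast
    have "z = idx_vec (\<lambda>k. (\<lambda>k. x k + b k) k + y k)" unfolding z by (simp add: vec_eq_iff)
    then show "z \<in> gen (psum X {b})" unfolding gen_def
      by (intro CollectI exI[of _ "\<lambda>k. x k + b k"] exI[of _ y]) (simp add: xb)
  qed
  then have "convex hull ((\<lambda>z. idx_vec b + z) ` gen X) \<subseteq> convex hull gen (psum X {b})" by (rule hull_mono)
  then have "(\<lambda>z. idx_vec b + z) ` newton X \<subseteq> newton (psum X {b})"
    by (simp add: convex_hull_translation newton_gen)
  then show ?thesis using assms by (auto simp: add.commute)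
qed

lemma K1a:
  assumes xv: "x \<in> Vert (psum A B)" and a: "a \<in> A" and b: "b \<in> B" and xab: "x = (\<lambda>k. a k + b k)"
  shows "a \<in> Vert A"
proof (rule ccontr)
  assume "a \<notin> Vert A"
  then have "idx_vec a \<in> newton (A - {a})" using a unfolding Vert_def by blast
  then have "idx_vec a + idx_vec b \<in> newton (psum (A - {a}) {b})" by (rule newton_translate)
  moreover have "psum (A - {a}) {b} \<subseteq> psum A B - {x}"
  proof
    fix z assume "z \<in> psum (A - {a}) {b}"
    then obtain a' where a': "a' \<in> A" "a' \<noteq> a" "z = (\<lambda>k. a' k + b k)" unfolding psum_def by blast
    have "z \<noteq> x"
    proof
      assume "z = x"
      then have "a' = a" using a'(3) xab by (auto simp: fun_eq_iff)
      then show False using a'(2) by simp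
    qed
    moreover have "z \<in> psum A B" unfolding psum_def using a' b by blast
    ultimately show "z \<in> psum A B - {x}" by blast
  qed
  then have "newton (psum (A - {a}) {b}) \<subseteq> newton (psum A B - {x})" by (rule newton_mono)
  moreover have "idx_vec x = idx_vec a + idx_vec b" unfolding xab by (rule idx_vec_add)
  ultimately have "idx_vec x \<in> newton (psum A B - {x})" by auto
  then show False using xv unfolding Vert_def by blast
qed

lemma K1u:
  assumes xv: "x \<in> Vert (psum A B)" and a: "a \<in> A" and b: "b \<in> B" and xab: "x = (\<lambda>k. a k + b k)"
    and a': "a' \<in> A" and b': "b' \<in> B" and xab': "x = (\<lambda>k. a' k + b' k)"
  shows "a' = a \<and> b' = b"
proof (rule ccontr)
  assume ne: "\<not> (a' = a \<and> b' = b)"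
  have nb: "b' \<noteq> b"
  proof
    assume "b' = b" then have "a' = a" using xab xab' by (auto simp: fun_eq_iff)
    then show False using ne \<open>b' = b\<close> by simp
  qed
  have na: "a' \<noteq> a"
  proof
    assume "a' = a" then have "b' = b" using xab xab' by (auto simp: fun_eq_iff)
    then show False using nb by simp
  qed
  define y1 where "y1 = (\<lambda>k. a k + b' k)"
  define y2 where "y2 = (\<lambda>k. a' k + b k)"
  have y1: "y1 \<in> psum A B - {x}"
  proof -
    have "y1 \<noteq> x" using nb xab unfolding y1_def by (auto simp: fun_eq_iff)
    moreover have "y1 \<in> psum A B" unfolding psum_def y1_def using a b' by blast
    ultimately show ?thesis by blast
  qed
  have y2: "y2 \<in> psum A B - {x}"
  proof -
    have "y2 \<noteq> x" using na xab unfolding y2_def by (auto simp: fun_eq_iff)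
    moreover have "y2 \<in> psum A B" unfolding psum_def y2_def using a' b by blast
    ultimately show ?thesis by blast
  qed
  have "idx_vec x = (1/2) *\<^sub>R idx_vec y1 + (1/2) *\<^sub>R idx_vec y2"
  proof (subst vec_eq_iff, intro allI)
    fix k
    have h1: "x k = a k + b k" by (simp add: xab)
    have h2: "x k = a' k + b' k" by (simp add: xab')
    have h: "2 * x k = a k + b' k + (a' k + b k)" using h1 h2 by arith
    have "real (x k) = real (a k + b' k) / 2 + real (a' k + b k) / 2"
    proof -
      have "real (2 * x k) = real (a k + b' k + (a' k + b k))" by (simp only: h)
      then have r: "2 * real (x k) = real (a k) + real (b' k) + (real (a' k) + real (b k))" by simp
      show ?thesis using r by (simp add: field_simps)
    qed
    then show "idx_vec x $ k = ((1/2) *\<^sub>R idx_vec y1 + (1/2) *\<^sub>R idx_vec y2) $ k"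
      unfolding y1_def y2_def by simp
  qed
  moreover have "(1/2) *\<^sub>R idx_vec y1 + (1/2) *\<^sub>R idx_vec y2 \<in> newton (psum A B - {x})"
    by (rule convexD[OF convex_newton idx_in_newton[OF y1] idx_in_newton[OF y2]]) auto
  moreover have "idx_vec x \<notin> newton (psum A B - {x})" using xv unfolding Vert_def by blast
  ultimately show False by simp
qed




lemma finite_le: "finite {A :: 'm::finite \<Rightarrow> nat. idx_le A J}"
proof -
  have "{A :: 'm \<Rightarrow> nat. idx_le A J} = PiE UNIV (\<lambda>k. {..J k})"
    by (auto simp: idx_le_def PiE_def Pi_def extensional_def)
  then show ?thesis by (simp add: finite_PiE)
qed

lemma finite_box: "finite (idx_box r :: ('m::finite \<Rightarrow> nat) set)"
proof -
  have "(idx_box r :: ('m \<Rightarrow> nat) set) = PiE UNIV (\<lambda>k. {..r})"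
    by (auto simp: idx_box_def PiE_def Pi_def extensional_def)
  then show ?thesis by (simp add: finite_PiE)
qed

lemma psumI: "a \<in> A \<Longrightarrow> b \<in> B \<Longrightarrow> x = (\<lambda>k. a k + b k) \<Longrightarrow> x \<in> psum A B"
  unfolding psum_def by blast

lemma Supp_mult: "Supp (mps_mult f g) \<subseteq> psum (Supp f) (Supp g)"
proof
  fix x assume "x \<in> Supp (mps_mult f g)"
  then have "(\<Sum>A\<in>{A. idx_le A x}. f A * g (\<lambda>k. x k - A k)) \<noteq> 0"
    by (simp add: Supp_def mps_mult_def)
  then obtain A where A: "A \<in> {A. idx_le A x}" "f A * g (\<lambda>k. x k - A k) \<noteq> 0"
    by (rule sum.not_neutral_contains_not_neutral)
  then have "f A \<noteq> 0" "g (\<lambda>k. x k - A k) \<noteq> 0" by auto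
  moreover have "x = (\<lambda>k. A k + (\<lambda>k. x k - A k) k)" using A(1) by (auto simp: idx_le_def fun_eq_iff)
  ultimately show "x \<in> psum (Supp f) (Supp g)" by (intro psumI) (auto simp: Supp_def)
qed

lemma mult_vertex:
  fixes f g :: "('m::finite, 'a::field) mps"
  assumes fa: "f a \<noteq> 0" and gb: "g b \<noteq> 0" and x: "x = (\<lambda>k. a k + b k)"
    and u: "\<And>a' b'. f a' \<noteq> 0 \<Longrightarrow> g b' \<noteq> 0 \<Longrightarrow> (\<lambda>k. a' k + b' k) = x \<Longrightarrow> a' = a"
  shows "mps_mult f g x \<noteq> 0"
proof -
  let ?L = "{A. idx_le A x}"
  have aL: "a \<in> ?L" using x by (simp add: idx_le_def)
  have xa: "(\<lambda>k. x k - a k) = b" using x by (simp add: fun_eq_iff)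
  have z: "f A * g (\<lambda>k. x k - A k) = 0" if "A \<in> ?L - {a}" for A
  proof (rule ccontr)
    assume "f A * g (\<lambda>k. x k - A k) \<noteq> 0"
    then have "f A \<noteq> 0" "g (\<lambda>k. x k - A k) \<noteq> 0" by auto
    moreover have "(\<lambda>k. A k + (\<lambda>k. x k - A k) k) = x" using that by (auto simp: idx_le_def fun_eq_iff)
    ultimately have "A = a" by (rule u)
    then show False using that by simp
  qed
  have "mps_mult f g x = f a * g (\<lambda>k. x k - a k) + (\<Sum>A\<in>?L - {a}. f A * g (\<lambda>k. x k - A k))"
    unfolding mps_mult_def using sum.remove[OF finite_le aL] by simp
  also have "(\<Sum>A\<in>?L - {a}. f A * g (\<lambda>k. x k - A k)) = 0" by (intro sum.neutral ballI z)
  finally have "mps_mult f g x = f a * g b" using xa by simp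
  then show ?thesis using fa gb by simp
qed

lemma step:
  fixes f g :: "('m::finite, 'a::field) mps"
  assumes f1: "Supp f \<subseteq> A" and f2: "Vert A \<subseteq> Supp f" and g1: "Supp g \<subseteq> B" and g2: "Vert B \<subseteq> Supp g"
  shows "Supp (mps_mult f g) \<subseteq> psum A B \<and> Vert (psum A B) \<subseteq> Supp (mps_mult f g)"
proof
  have "psum (Supp f) (Supp g) \<subseteq> psum A B" using f1 g1 unfolding psum_def by blast
  then show "Supp (mps_mult f g) \<subseteq> psum A B" using Supp_mult by blast
  show "Vert (psum A B) \<subseteq> Supp (mps_mult f g)"
  proof
    fix x assume xv: "x \<in> Vert (psum A B)"
    then have "x \<in> psum A B" using Vert_sub by blast
    then obtain a b where ab: "a \<in> A" "b \<in> B" "x = (\<lambda>k. a k + b k)" unfolding psum_def by blast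
    have av: "a \<in> Vert A" by (rule K1a[OF xv ab])
    have xv': "x \<in> Vert (psum B A)" using xv psum_comm by metis
    have bv: "b \<in> Vert B" by (rule K1a[OF xv' ab(2,1)]) (simp add: ab(3) add.commute)
    have "mps_mult f g x \<noteq> 0"
    proof (rule mult_vertex[OF _ _ ab(3)])
      show "f a \<noteq> 0" using av f2 by (auto simp: Supp_def)
      show "g b \<noteq> 0" using bv g2 by (auto simp: Supp_def)
      fix a' b' assume "f a' \<noteq> 0" "g b' \<noteq> 0" "(\<lambda>k. a' k + b' k) = x"
      then have "a' \<in> A" "b' \<in> B" using f1 g1 by (auto simp: Supp_def)
      then show "a' = a" using K1u[OF xv ab] \<open>(\<lambda>k. a' k + b' k) = x\<close> by blast
    qed
    then show "x \<in> Supp (mps_mult f g)" by (simp add: Supp_def)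
  qed
qed

lemma Supp_one: "Supp (mps_one :: ('m::finite, 'a::field) mps) = {(\<lambda>k. 0)}"
  by (auto simp: Supp_def mps_one_def fun_eq_iff)

lemma pow_step:
  fixes f :: "('m::finite, 'a::field) mps"
  assumes f1: "Supp f \<subseteq> A" and f2: "Vert A \<subseteq> Supp f"
  shows "Supp (mps_pow f n) \<subseteq> mink_pow A n \<and> Vert (mink_pow A n) \<subseteq> Supp (mps_pow f n)"
proof (induction n)
  case 0
  then show ?case using Vert_sub[of "{(\<lambda>k. 0)}"] by (simp add: Supp_one)
next
  case (Suc n)
  have e: "mink_pow A (Suc n) = psum A (mink_pow A n)" by (simp add: psum_def)
  show ?case unfolding e mps_pow.simps
    using step[OF f1 f2] Suc.IH by blast
qed

lemma Theta_Supp: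
  fixes f :: "('m::finite, 'a::field_char_0) mps"
  shows "Supp (mps_Theta J f) = Theta_trop J (Supp f)"
proof -
  have pos: "(\<Prod>k\<in>UNIV. fact (S k + J k) div fact (S k) :: nat) \<noteq> 0" for S :: "'m \<Rightarrow> nat"
  proof -
    have h: "fact (S k + J k) div fact (S k) \<noteq> (0::nat)" for k
    proof -
      have "fact (S k) \<le> (fact (S k + J k) :: nat)" by (rule fact_mono) simp
      moreover have "0 < (fact (S k) :: nat)" by (rule fact_gt_zero)
      ultimately have "0 < fact (S k + J k) div (fact (S k) :: nat)" by (simp add: div_greater_zero_iff)
      then show ?thesis by simp
    qed
    show ?thesis by (simp add: prod_zero_iff h)
  qed
  have "S \<in> Supp (mps_Theta J f) \<longleftrightarrow> f (\<lambda>k. S k + J k) \<noteq> 0" for S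
    using pos[of S] by (simp add: Supp_def mps_Theta_def)
  moreover have "S \<in> Theta_trop J (Supp f) \<longleftrightarrow> f (\<lambda>k. S k + J k) \<noteq> 0" for S
  proof
    assume "S \<in> Theta_trop J (Supp f)"
    then obtain s where s: "S = (\<lambda>k. s k - J k)" "f s \<noteq> 0" "\<forall>k. J k \<le> s k"
      unfolding Theta_trop_def Supp_def by blast
    have "(\<lambda>k. S k + J k) = s" using s(1,3) by (auto simp: fun_eq_iff)
    then show "f (\<lambda>k. S k + J k) \<noteq> 0" using s(2) by simp
  next
    assume "f (\<lambda>k. S k + J k) \<noteq> 0"
    moreover have "S = (\<lambda>k. (\<lambda>k. S k + J k) k - J k)" by simp
    ultimately show "S \<in> Theta_trop J (Supp f)" unfolding Theta_trop_def Supp_def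
      by (intro CollectI exI[of _ "\<lambda>k. S k + J k"]) auto
  qed
  ultimately show ?thesis by blast
qed




lemma mps_mult_apply: "mps_mult f g J = (\<Sum>A\<in>{A. idx_le A J}. f A * g (\<lambda>k. J k - A k))"
  by (simp add: mps_mult_def)

lemma mult_lcomm:
  fixes f g h :: "('m::finite, 'a::comm_ring_1) mps"
  shows "mps_mult f (mps_mult g h) = mps_mult g (mps_mult f h)"
proof (rule ext)
  fix J :: "'m \<Rightarrow> nat"
  let ?L = "{A. idx_le A J}"
  define T where "T f g = (\<Sum>A\<in>?L. \<Sum>B\<in>?L. if (\<forall>k. A k + B k \<le> J k) then f A * g B * h (\<lambda>k. J k - A k - B k) else 0)"
    for f g :: "('m, 'a) mps"
  have key: "mps_mult f (mps_mult g h) J = T f g" for f g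
  proof -
    have inner: "f A * mps_mult g h (\<lambda>k. J k - A k) = (\<Sum>B\<in>?L. if (\<forall>k. A k + B k \<le> J k) then f A * g B * h (\<lambda>k. J k - A k - B k) else 0)"
      if A: "idx_le A J" for A
    proof -
      have set: "{B. idx_le B (\<lambda>k. J k - A k)} = {B \<in> ?L. \<forall>k. A k + B k \<le> J k}"
      proof (intro set_eqI iffI)
        fix B assume "B \<in> {B. idx_le B (\<lambda>k. J k - A k)}"
        then have "B k \<le> J k - A k" for k by (simp add: idx_le_def)
        moreover have "A k \<le> J k" for k using A by (simp add: idx_le_def)
        ultimately have c: "A k + B k \<le> J k" for k by (metis le_diff_conv2 add.commute)
        then have "B k \<le> J k" for k by (metis add_leD2)
        then show "B \<in> {B \<in> ?L. \<forall>k. A k + B k \<le> J k}" using c by (simp add: idx_le_def)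
      next
        fix B assume "B \<in> {B \<in> ?L. \<forall>k. A k + B k \<le> J k}"
        then have "A k + B k \<le> J k" for k by blast
        then have "B k \<le> J k - A k" for k by (metis le_diff_conv2 add.commute le_add2 order_trans)
        then show "B \<in> {B. idx_le B (\<lambda>k. J k - A k)}" by (simp add: idx_le_def)
      qed
      have "mps_mult g h (\<lambda>k. J k - A k) = (\<Sum>B\<in>{B \<in> ?L. \<forall>k. A k + B k \<le> J k}. g B * h (\<lambda>k. J k - A k - B k))"
        unfolding mps_mult_apply[of g h] set by simp
      also have "\<dots> = (\<Sum>B\<in>?L. if (\<forall>k. A k + B k \<le> J k) then g B * h (\<lambda>k. J k - A k - B k) else 0)"
        by (rule sum.inter_filter[OF finite_le])
      finally have "f A * mps_mult g h (\<lambda>k. J k - A k) = (\<Sum>B\<in>?L. f A * (if (\<forall>k. A k + B k \<le> J k) then g B * h (\<lambda>k. J k - A k - B k) else 0))"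
        by (simp add: sum_distrib_left)
      also have "\<dots> = (\<Sum>B\<in>?L. if (\<forall>k. A k + B k \<le> J k) then f A * g B * h (\<lambda>k. J k - A k - B k) else 0)"
        by (rule sum.cong) (auto simp: mult.assoc)
      finally show ?thesis .
    qed
    show ?thesis unfolding mps_mult_apply[of f "mps_mult g h" J] T_def
      by (rule sum.cong[OF refl]) (simp add: inner)
  qed
  have sym: "T f g = T g f"
  proof -
    have "T f g = (\<Sum>B\<in>?L. \<Sum>A\<in>?L. if (\<forall>k. A k + B k \<le> J k) then f A * g B * h (\<lambda>k. J k - A k - B k) else 0)"
      unfolding T_def by (rule sum.swap)
    also have "\<dots> = T g f" unfolding T_def
    proof (intro sum.cong refl)
      fix A B
      have e1: "(\<lambda>k. J k - B k - A k) = (\<lambda>k. J k - A k - B k)" by (simp add: fun_eq_iff add.commute)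
      have e2: "(\<forall>k. B k + A k \<le> J k) = (\<forall>k. A k + B k \<le> J k)" by (simp add: add.commute)
      show "(if (\<forall>k. B k + A k \<le> J k) then f B * g A * h (\<lambda>k. J k - B k - A k) else 0) =
            (if (\<forall>k. A k + B k \<le> J k) then g A * f B * h (\<lambda>k. J k - A k - B k) else 0)"
        unfolding e1 e2 by (simp add: mult.commute)
    qed
    finally show ?thesis .
  qed
  show "mps_mult f (mps_mult g h) J = mps_mult g (mps_mult f h) J"
    using key[of f g] key[of g f] sym by simp
qed

lemma cfc: "comp_fun_commute (\<lambda>i acc. mps_mult (F i :: ('m::finite, 'a::comm_ring_1) mps) acc)"
proof (unfold_locales)
  fix x y
  show "(\<lambda>acc. mps_mult (F y) acc) \<circ> (\<lambda>acc. mps_mult (F x) acc) = (\<lambda>acc. mps_mult (F x) acc) \<circ> (\<lambda>acc. mps_mult (F y) acc)"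
  proof (rule ext)
    fix z show "((\<lambda>acc. mps_mult (F y) acc) \<circ> (\<lambda>acc. mps_mult (F x) acc)) z = ((\<lambda>acc. mps_mult (F x) acc) \<circ> (\<lambda>acc. mps_mult (F y) acc)) z"
      unfolding o_apply by (rule mult_lcomm)
  qed
qed

lemma prod_insert:
  assumes "finite I" "i \<notin> I"
  shows "mps_prod F (insert i I) = mps_mult (F i) (mps_prod (F :: 'b \<Rightarrow> ('m::finite, 'a::comm_ring_1) mps) I)"
proof -
  interpret c: comp_fun_commute "\<lambda>i acc. mps_mult (F i) acc" by (rule cfc)
  show ?thesis unfolding mps_prod_def using assms by (simp add: c.fold_insert)
qed

lemma prod_empty: "mps_prod F {} = mps_one"
  by (simp add: mps_prod_def)

lemma msf_empty: "mink_sum_family A {} = {(\<lambda>k. 0)}"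
  by (auto simp: mink_sum_family_def)

lemma msf_insert:
  assumes fin: "finite I" and i: "i \<notin> I"
  shows "mink_sum_family A (insert i I) = psum (A i) (mink_sum_family A I)"
proof (intro set_eqI iffI)
  fix z assume "z \<in> mink_sum_family A (insert i I)"
  then obtain f where f: "\<forall>p\<in>insert i I. f p \<in> A p" "z = (\<lambda>k. \<Sum>p\<in>insert i I. f p k)"
    unfolding mink_sum_family_def by blast
  have "z = (\<lambda>k. f i k + (\<lambda>k. \<Sum>p\<in>I. f p k) k)" using f(2) fin i by simp
  moreover have "(\<lambda>k. \<Sum>p\<in>I. f p k) \<in> mink_sum_family A I"
    unfolding mink_sum_family_def using f(1) by blast
  ultimately show "z \<in> psum (A i) (mink_sum_family A I)" using f(1) by (intro psumI) auto
next
  fix z assume "z \<in> psum (A i) (mink_sum_family A I)"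
  then obtain a b where ab: "a \<in> A i" "b \<in> mink_sum_family A I" "z = (\<lambda>k. a k + b k)"
    unfolding psum_def by blast
  then obtain g where g: "\<forall>p\<in>I. g p \<in> A p" "b = (\<lambda>k. \<Sum>p\<in>I. g p k)"
    unfolding mink_sum_family_def by blast
  define f where "f = g(i := a)"
  have s: "(\<Sum>p\<in>I. f p k) = (\<Sum>p\<in>I. g p k)" for k
    by (rule sum.cong) (use i in \<open>auto simp: f_def\<close>)
  have "z = (\<lambda>k. \<Sum>p\<in>insert i I. f p k)" using ab(3) g(2) fin i s by (simp add: f_def)
  moreover have "\<forall>p\<in>insert i I. f p \<in> A p" using g(1) ab(1) by (simp add: f_def)
  ultimately show "z \<in> mink_sum_family A (insert i I)" unfolding mink_sum_family_def by blast
qed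

lemma prod_step:
  fixes F :: "'b \<Rightarrow> ('m::finite, 'a::field) mps"
  assumes fin: "finite I" and h: "\<forall>p\<in>I. Supp (F p) \<subseteq> A p \<and> Vert (A p) \<subseteq> Supp (F p)"
  shows "Supp (mps_prod F I) \<subseteq> mink_sum_family A I \<and> Vert (mink_sum_family A I) \<subseteq> Supp (mps_prod F I)"
  using fin h
proof (induction I rule: finite_induct)
  case empty
  then show ?case using Vert_sub[of "{(\<lambda>k. 0)}"] by (simp add: prod_empty msf_empty Supp_one)
next
  case (insert i I)
  have hi: "Supp (F i) \<subseteq> A i" "Vert (A i) \<subseteq> Supp (F i)" using insert.prems by auto
  have IH: "Supp (mps_prod F I) \<subseteq> mink_sum_family A I \<and> Vert (mink_sum_family A I) \<subseteq> Supp (mps_prod F I)"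
    using insert.IH insert.prems by auto
  show ?case unfolding prod_insert[OF insert.hyps] msf_insert[OF insert.hyps]
    using step[OF hi(1) hi(2)] IH by blast
qed

theorem mainTheorem9:
  fixes \<phi> :: "nat \<Rightarrow> ('m::finite \<Rightarrow> nat) \<Rightarrow> 'a::{alg_closed_field, field_char_0}"
    and n r :: nat
    and M :: "nat \<Rightarrow> ('m \<Rightarrow> nat) \<Rightarrow> nat"
  assumes "n \<ge> 1"
  shows "trop (diff_mono_eval n r M \<phi>) = Vert (diff_mono_trop_sets n r M (\<lambda>i. Supp (\<phi> i)))
       \<and> Vert (diff_mono_trop_sets n r M (\<lambda>i. Supp (\<phi> i))) = eps_M n r M (\<lambda>i. Supp (\<phi> i))"
proof
  define I where "I = {..<n} \<times> (idx_box r :: ('m \<Rightarrow> nat) set)"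
  define F where "F = (\<lambda>(i, J). mps_pow (mps_Theta J (\<phi> i)) (M i J))"
  define A where "A = (\<lambda>(i, J). mink_pow (Theta_trop J (Supp (\<phi> i))) (M i J))"
  have fin: "finite I" unfolding I_def by (intro finite_cartesian_product finite_lessThan finite_box)
  have h: "\<forall>p\<in>I. Supp (F p) \<subseteq> A p \<and> Vert (A p) \<subseteq> Supp (F p)"
  proof
    fix p assume "p \<in> I"
    obtain i J where p: "p = (i, J)" by (cases p)
    have e: "Supp (mps_Theta J (\<phi> i)) = Theta_trop J (Supp (\<phi> i))" by (rule Theta_Supp)
    have "Supp (mps_Theta J (\<phi> i)) \<subseteq> Theta_trop J (Supp (\<phi> i))" using e by simp
    moreover have "Vert (Theta_trop J (Supp (\<phi> i))) \<subseteq> Supp (mps_Theta J (\<phi> i))" using e Vert_sub by simp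
    ultimately show "Supp (F p) \<subseteq> A p \<and> Vert (A p) \<subseteq> Supp (F p)"
      unfolding p F_def A_def by (simp add: pow_step)
  qed
  have E: "diff_mono_eval n r M \<phi> = mps_prod F I"
    unfolding diff_mono_eval_def F_def I_def by simp
  have T: "diff_mono_trop_sets n r M (\<lambda>i. Supp (\<phi> i)) = mink_sum_family A I"
    unfolding diff_mono_trop_sets_def A_def I_def by simp
  have P: "Supp (mps_prod F I) \<subseteq> mink_sum_family A I \<and> Vert (mink_sum_family A I) \<subseteq> Supp (mps_prod F I)"
    by (rule prod_step[OF fin h])
  show "trop (diff_mono_eval n r M \<phi>) = Vert (diff_mono_trop_sets n r M (\<lambda>i. Supp (\<phi> i)))"
    unfolding trop_def E T using K2 P by blast
  show "Vert (diff_mono_trop_sets n r M (\<lambda>i. Supp (\<phi> i))) = eps_M n r M (\<lambda>i. Supp (\<phi> i))"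
    by (simp add: eps_M_def)
qed


end
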